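(* Let $T=\{(e_1,f_1),\dots,(e_m,f_m)\}\subset\mathbb{N}^2$ be completely disjointed and negative, with $f_1<\dots<f_m$. For a permutation $\sigma\in S_m$ put $\sigma(T)=\{(e_{\sigma(1)},f_1),\dots,(e_{\sigma(m)},f_m)\}$, and let $\mathcal{T}=\{\sigma(T)\mid\sigma\in S_m,\ \sigma(T)\text{ negative}\}$. Order $\mathcal{T}$ by declaring $\{(a_1,f_1),\dots,(a_m,f_m)\}<\{(b_1,f_1),\dots,(b_m,f_m)\}$ if $a_i>b_i$ for the smallest $i$ with $a_i\ne b_i$, and let $\widetilde{T}$ be the minimal element of $\mathcal{T}$. Then $\widetilde T$ is a negative twisted chain.
   Context: $\mathbb{N}$ = positive integers. A subset of $\mathbb{N}^2$ is negative if each element $(e,f)$ has $e<f$. A subset $\{(e_1,f_1),\dots,(e_m,f_m)\}$ of $\mathbb{N}^2$ is completely disjointed if the $2m$ numbers $e_1,f_1,\dots,e_m,f_m$ are pairwise distinct. For negative points, $(e,f)\prec(g,h)$ means $f<h$ and $e>g$, and $(c,d)\wedge(e,f)=(\max(c,e),\min(d,f))$. A negative twisted chain is a completely disjointed negative subset $T$ of $\mathbb{N}^2$ such that for all distinct $u,v\in T$, either $u\prec v$, or $v\prec u$, or $u\wedge v$ is not negative. *)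

theory Defs
  imports Main "HOL-Combinatorics.Permutations"
begin

text \<open>Points of N^2 are pairs of naturals; positivity is imposed separately.\<close>

definition negative :: "(nat \<times> nat) set \<Rightarrow> bool" where
  "negative S \<longleftrightarrow> (\<forall>(e, f) \<in> S. e < f)"

text \<open>The 2m coordinates of the m (distinct) points are pairwise distinct.\<close>
definition completely_disjointed :: "(nat \<times> nat) set \<Rightarrow> bool" where
  "completely_disjointed S \<longleftrightarrow>
     (\<exists>ps. distinct ps \<and> set ps = S \<and> distinct (concat (map (\<lambda>(e, f). [e, f]) ps)))"

definition prec :: "nat \<times> nat \<Rightarrow> nat \<times> nat \<Rightarrow> bool" (infix "\<prec>\<^sub>n" 50) where
  "u \<prec>\<^sub>n v \<longleftrightarrow> snd u < snd v \<and> fst u > fst v"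

definition meet :: "nat \<times> nat \<Rightarrow> nat \<times> nat \<Rightarrow> nat \<times> nat" where
  "meet u v = (max (fst u) (fst v), min (snd u) (snd v))"

definition negative_twisted_chain :: "(nat \<times> nat) set \<Rightarrow> bool" where
  "negative_twisted_chain T \<longleftrightarrow> completely_disjointed T \<and> negative T \<and>
     (\<forall>u\<in>T. \<forall>v\<in>T. u \<noteq> v \<longrightarrow> u \<prec>\<^sub>n v \<or> v \<prec>\<^sub>n u \<or> \<not> negative {meet u v})"

definition perm_set :: "(nat \<Rightarrow> nat) \<Rightarrow> (nat \<Rightarrow> nat) \<Rightarrow> nat \<Rightarrow> (nat \<Rightarrow> nat) \<Rightarrow> (nat \<times> nat) set" where
  "perm_set e f m \<sigma> = (\<lambda>i. (e (\<sigma> i), f i)) ` {1..m}"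

definition perm_less :: "(nat \<Rightarrow> nat) \<Rightarrow> nat \<Rightarrow> (nat \<Rightarrow> nat) \<Rightarrow> (nat \<Rightarrow> nat) \<Rightarrow> bool" where
  "perm_less e m \<sigma> \<tau> \<longleftrightarrow>
     (\<exists>k\<in>{1..m}. (\<forall>i\<in>{1..<k}. e (\<sigma> i) = e (\<tau> i)) \<and> e (\<sigma> k) > e (\<tau> k))"

end

theory Submission
  imports Defs
begin

lemma set_cp: "set (concat (map (\<lambda>(e, f). [e, f]) ps)) = fst ` set ps \<union> snd ` set ps"
proof (induction ps)
  case (Cons p ps)
  obtain a b where "p = (a, b)" by fastforce
  then show ?case using Cons by (simp add: insert_commute)
qed simp

lemma concat_pairs_distinct:
  "distinct (concat (map (\<lambda>(e, f). [e, f]) ps)) \<longleftrightarrow> distinct (map fst ps @ map snd ps)"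
proof (induction ps)
  case (Cons p ps)
  obtain a b where p: "p = (a, b)" by fastforce
  have "distinct (concat (map (\<lambda>(e, f). [e, f]) (p # ps))) \<longleftrightarrow>
     a \<noteq> b \<and> a \<notin> fst ` set ps \<and> a \<notin> snd ` set ps \<and> b \<notin> fst ` set ps \<and> b \<notin> snd ` set ps
     \<and> distinct (map fst ps @ map snd ps)"
    using Cons.IH by (auto simp: p set_cp image_iff)
  also have "\<dots> \<longleftrightarrow> distinct (map fst (p # ps) @ map snd (p # ps))"
    by (auto simp: p image_iff)
  finally show ?case .
qed simp

lemma cd_iff:
  "completely_disjointed S \<longleftrightarrow> finite S \<and> inj_on fst S \<and> inj_on snd S \<and> fst ` S \<inter> snd ` S = {}"
proof
  assume "completely_disjointed S"
  then obtain ps where ps: "distinct ps" "set ps = S" "distinct (map fst ps @ map snd ps)"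
    unfolding completely_disjointed_def concat_pairs_distinct by blast
  have d: "distinct (map fst ps)" "distinct (map snd ps)" "set (map fst ps) \<inter> set (map snd ps) = {}"
    using ps(3) by (simp_all only: distinct_append)
  have "inj_on fst S" using d(1) ps(2) by (simp only: distinct_map)
  moreover have "inj_on snd S" using d(2) ps(2) by (simp only: distinct_map)
  moreover have "fst ` S \<inter> snd ` S = {}" using d(3) ps(2) by (simp only: set_map)
  moreover have "finite S" using ps(2) by (metis finite_set)
  ultimately show "finite S \<and> inj_on fst S \<and> inj_on snd S \<and> fst ` S \<inter> snd ` S = {}"
    by blast
next
  assume h: "finite S \<and> inj_on fst S \<and> inj_on snd S \<and> fst ` S \<inter> snd ` S = {}"
  have fin: "finite S" and i1: "inj_on fst S" and i2: "inj_on snd S"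
    and dj: "fst ` S \<inter> snd ` S = {}" using h by auto
  obtain ps where ps: "distinct ps" "set ps = S" using finite_distinct_list[OF fin] by blast
  have "distinct (map fst ps @ map snd ps)"
    unfolding distinct_append distinct_map set_map ps(2) using ps(1) i1 i2 dj by blast
  then show "completely_disjointed S"
    unfolding completely_disjointed_def concat_pairs_distinct using ps by blast
qed

theorem lemma9p2:
  fixes e f :: "nat \<Rightarrow> nat" and m :: nat and \<sigma> :: "nat \<Rightarrow> nat"
  assumes pos: "\<forall>i\<in>{1..m}. 0 < e i \<and> 0 < f i"
    and cd: "completely_disjointed ((\<lambda>i. (e i, f i)) ` {1..m})"
    and neg: "negative ((\<lambda>i. (e i, f i)) ` {1..m})"
    and incr: "\<forall>i\<in>{1..m}. \<forall>j\<in>{1..m}. i < j \<longrightarrow> f i < f j"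
    and perm: "\<sigma> permutes {1..m}"
    and in_fam: "negative (perm_set e f m \<sigma>)"
    and minimal: "\<not> (\<exists>\<tau>. \<tau> permutes {1..m} \<and> negative (perm_set e f m \<tau>) \<and>
                        perm_less e m \<tau> \<sigma>)"
  shows "negative_twisted_chain (perm_set e f m \<sigma>)"
proof -
  let ?S = "(\<lambda>i. (e i, f i)) ` {1..m}"
  have cdS: "inj_on fst ?S" "inj_on snd ?S" "fst ` ?S \<inter> snd ` ?S = {}"
    using cd unfolding cd_iff by blast+
  have finj: "i = j" if "f i = f j" "i \<in> {1..m}" "j \<in> {1..m}" for i j
  proof (rule ccontr)
    assume "i \<noteq> j"
    then consider "i < j" | "j < i" by linarith
    then show False using incr that by cases fastforce+
  qed
  have einj: "i = j" if a: "e i = e j" "i \<in> {1..m}" "j \<in> {1..m}" for i j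
  proof -
    have "(e i, f i) \<in> ?S" "(e j, f j) \<in> ?S" using a by blast+
    moreover have "fst (e i, f i) = fst (e j, f j)" using a by simp
    ultimately have "(e i, f i) = (e j, f j)" using cdS(1) unfolding inj_on_def by blast
    then show "i = j" using finj a by simp
  qed
  have ef: "e i \<noteq> f j" if "i \<in> {1..m}" "j \<in> {1..m}" for i j
  proof
    assume "e i = f j"
    have "e i \<in> fst ` ?S"
      by (rule image_eqI[of _ _ "(e i, f i)"]) (use that in auto)
    moreover have "f j \<in> snd ` ?S"
      by (rule image_eqI[of _ _ "(e j, f j)"]) (use that in auto)
    ultimately have "e i \<in> fst ` ?S \<inter> snd ` ?S" using \<open>e i = f j\<close> by simp
    then show False using cdS(3) by (metis empty_iff)
  qed
  have sig: "\<sigma> i \<in> {1..m}" if "i \<in> {1..m}" for i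
    using that permutes_in_image[OF perm] by blast
  have sinj: "\<sigma> i = \<sigma> j \<Longrightarrow> i = j" for i j
    using permutes_inj[OF perm] by (simp add: inj_eq)
  have negs: "e (\<sigma> i) < f i" if "i \<in> {1..m}" for i
  proof -
    have "(e (\<sigma> i), f i) \<in> perm_set e f m \<sigma>" unfolding perm_set_def using that by blast
    then show ?thesis using in_fam unfolding negative_def by blast
  qed
  have key: "e (\<sigma> j) < e (\<sigma> i) \<or> f i \<le> max (e (\<sigma> i)) (e (\<sigma> j))"
    if ij: "i < j" "i \<in> {1..m}" "j \<in> {1..m}" for i j
  proof (rule ccontr)
    assume nk: "\<not> ?thesis"
    have "\<sigma> i \<noteq> \<sigma> j" using sinj ij(1) by blast
    then have "e (\<sigma> j) \<noteq> e (\<sigma> i)" using einj sig ij(2,3) by metis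
    then have lt: "e (\<sigma> i) < e (\<sigma> j)" "e (\<sigma> j) < f i" using nk by auto
    define \<tau> where "\<tau> = \<sigma> \<circ> Transposition.transpose i j"
    have ti: "\<tau> i = \<sigma> j" and tj: "\<tau> j = \<sigma> i" unfolding \<tau>_def by simp_all
    have tk: "\<tau> k = \<sigma> k" if "k \<noteq> i" "k \<noteq> j" for k
      unfolding \<tau>_def using that by simp
    have tp: "\<tau> permutes {1..m}" unfolding \<tau>_def
      by (rule permutes_compose[OF permutes_swap_id[OF ij(2,3)] perm])
    have fij: "f i < f j" using incr ij by blast
    have "negative (perm_set e f m \<tau>)"
      unfolding negative_def perm_set_def
    proof
      fix x assume "x \<in> (\<lambda>k. (e (\<tau> k), f k)) ` {1..m}"
      then obtain k where k: "k \<in> {1..m}" "x = (e (\<tau> k), f k)" by blast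
      have "e (\<tau> k) < f k"
      proof (cases "k = i")
        case True then show ?thesis using lt ti by simp
      next
        case False
        show ?thesis
        proof (cases "k = j")
          case True
          then show ?thesis using lt fij tj by simp
        next
          case False
          then show ?thesis using \<open>k \<noteq> i\<close> k negs tk by simp
        qed
      qed
      then show "case x of (e, f) \<Rightarrow> e < f" using k by simp
    qed
    moreover have "perm_less e m \<tau> \<sigma>"
      unfolding perm_less_def
    proof (rule bexI[of _ i])
      have "\<forall>l\<in>{1..<i}. e (\<tau> l) = e (\<sigma> l)" using tk ij(1) by simp
      then show "(\<forall>l\<in>{1..<i}. e (\<tau> l) = e (\<sigma> l)) \<and> e (\<sigma> i) < e (\<tau> i)"
        using lt ti by simp
    qed (rule ij(2))
    ultimately show False using minimal tp by blast
  qed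
  have "completely_disjointed (perm_set e f m \<sigma>)"
    unfolding cd_iff perm_set_def
  proof (intro conjI)
    show "inj_on fst ((\<lambda>i. (e (\<sigma> i), f i)) ` {1..m})"
    proof (rule inj_onI)
      fix x y assume "x \<in> (\<lambda>i. (e (\<sigma> i), f i)) ` {1..m}" "y \<in> (\<lambda>i. (e (\<sigma> i), f i)) ` {1..m}"
        "fst x = fst y"
      then obtain i j where "i \<in> {1..m}" "j \<in> {1..m}" "x = (e (\<sigma> i), f i)" "y = (e (\<sigma> j), f j)"
        "e (\<sigma> i) = e (\<sigma> j)" by auto
      then show "x = y" using einj sig sinj by metis
    qed
    show "inj_on snd ((\<lambda>i. (e (\<sigma> i), f i)) ` {1..m})"
    proof (rule inj_onI)
      fix x y assume "x \<in> (\<lambda>i. (e (\<sigma> i), f i)) ` {1..m}" "y \<in> (\<lambda>i. (e (\<sigma> i), f i)) ` {1..m}"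
        "snd x = snd y"
      then obtain i j where "i \<in> {1..m}" "j \<in> {1..m}" "x = (e (\<sigma> i), f i)" "y = (e (\<sigma> j), f j)"
        "f i = f j" by auto
      then show "x = y" using finj by metis
    qed
    show "fst ` (\<lambda>i. (e (\<sigma> i), f i)) ` {1..m} \<inter> snd ` (\<lambda>i. (e (\<sigma> i), f i)) ` {1..m} = {}"
    proof (rule equals0I)
      fix x assume "x \<in> fst ` (\<lambda>i. (e (\<sigma> i), f i)) ` {1..m} \<inter> snd ` (\<lambda>i. (e (\<sigma> i), f i)) ` {1..m}"
      then obtain i j where "i \<in> {1..m}" "j \<in> {1..m}" "x = e (\<sigma> i)" "x = f j" by auto
      then show False using ef sig by metis
    qed
  qed simp
  moreover have "\<forall>u\<in>perm_set e f m \<sigma>. \<forall>v\<in>perm_set e f m \<sigma>. u \<noteq> v \<longrightarrow>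
      u \<prec>\<^sub>n v \<or> v \<prec>\<^sub>n u \<or> \<not> negative {meet u v}"
  proof (intro ballI impI)
    fix u v assume u: "u \<in> perm_set e f m \<sigma>" and v: "v \<in> perm_set e f m \<sigma>" and uv: "u \<noteq> v"
    obtain i where i: "i \<in> {1..m}" "u = (e (\<sigma> i), f i)" using u unfolding perm_set_def by blast
    obtain j where j: "j \<in> {1..m}" "v = (e (\<sigma> j), f j)" using v unfolding perm_set_def by blast
    have "i \<noteq> j" using uv i j by blast
    then consider "i < j" | "j < i" by linarith
    then show "u \<prec>\<^sub>n v \<or> v \<prec>\<^sub>n u \<or> \<not> negative {meet u v}"
    proof cases
      case 1
      have "f i < f j" using incr i j 1 by blast
      then show ?thesis using key[OF 1 i(1) j(1)] i j
        by (auto simp: prec_def negative_def meet_def)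
    next
      case 2
      have "f j < f i" using incr i j 2 by blast
      then show ?thesis using key[OF 2 j(1) i(1)] i j
        by (auto simp: prec_def negative_def meet_def)
    qed
  qed
  ultimately show ?thesis using in_fam unfolding negative_twisted_chain_def by blast
qed

end
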